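(* Let $q\ge2$ be even and $d\ge q$. Let $f$ be a density on $\mathbb{R}^d$ with mode $\boldsymbol\theta$, sufficiently smooth, whose $(q+1)$-st order term of the Taylor expansion around $\boldsymbol\theta$ is of the form $\prod_{i=1}^{q+1}\mathbf a_i^\top(\mathbf x-\boldsymbol\theta)$, where $\mathbf a_1,\ldots,\mathbf a_{q+1}$ span a $q$-dimensional subspace of $\mathbb{R}^d$, and suppose $\sum_{i=1}^{q+1}s_i\mathbf a_i=\mathbf 0$ for some coefficients with $s_1s_2\cdots s_{q+1}\neq0$. Then there is a choice of $\mathrm Q$ for which the asymptotic bias is equal to zero, i.e. $\nabla(\nabla^\top\mathrm Q\nabla)^{q/2}f(\boldsymbol\theta)=\mathbf 0$.
   Context: Setting: $\mathrm A=\{Hf(\boldsymbol\theta)\}^{-1}$ is assumed to exist. For a radial $q$-th order kernel $K(\mathbf x)=G(\|\mathbf x\|)$ and a $d\times d$ matrix $\mathrm P$ with $|\det\mathrm P|=1$, the elliptic kernel is $K_{\mathrm P}(\mathbf x)=K(\mathrm P\mathbf x)$ and $\mathrm Q=\mathrm P^{-1}\mathrm P^{-\top}$ (symmetric positive definite). The asymptotic bias of the kernel mode estimator with kernel $K_{\mathrm P}$ and bandwidth $h_n$ is $-\frac{\pi^{d/2}h_n^q}{2^{q-1}\Gamma(\frac{d+q}{2})\Gamma(\frac q2+1)}B_{d,q}(G)\,\mathrm A\,\nabla(\nabla^\top\mathrm Q\nabla)^{q/2}f(\boldsymbol\theta)$ with $B_{d,q}(G)=\int_0^\infty x^{d-1+q}G(x)dx\ne0$,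 so it vanishes iff $\nabla(\nabla^\top\mathrm Q\nabla)^{q/2}f(\boldsymbol\theta)=\mathbf 0$ (a quantity depending only on the $(q+1)$-st order Taylor term of $f$ at $\boldsymbol\theta$). *)

theory Defs
  imports "HOL-Analysis.Analysis"
begin

definition pdiff :: "'n::finite \<Rightarrow> (real^'n \<Rightarrow> real) \<Rightarrow> real^'n \<Rightarrow> real" where
  "pdiff i g x = deriv (\<lambda>t. g (x + t *\<^sub>R axis i 1)) 0"

fun ipdiff :: "'n::finite list \<Rightarrow> (real^'n \<Rightarrow> real) \<Rightarrow> real^'n \<Rightarrow> real" where
  "ipdiff [] g = g"
| "ipdiff (i # js) g = pdiff i (ipdiff js g)"

definition Ck_partials :: "nat \<Rightarrow> (real^'n::finite \<Rightarrow> real) \<Rightarrow> bool" where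
  "Ck_partials k g \<longleftrightarrow>
     (\<forall>js. length js < k \<longrightarrow> (\<forall>i x.
        ((\<lambda>t. ipdiff js g (x + t *\<^sub>R axis i 1)) has_real_derivative ipdiff (i # js) g x) (at 0)))
   \<and> (\<forall>js. length js \<le> k \<longrightarrow> continuous_on UNIV (ipdiff js g))"

definition hessian :: "(real^'n::finite \<Rightarrow> real) \<Rightarrow> real^'n \<Rightarrow> real^'n^'n" where
  "hessian g x = (\<chi> i j. pdiff i (pdiff j g) x)"

definition QLap :: "real^'n^'n \<Rightarrow> (real^'n::finite \<Rightarrow> real) \<Rightarrow> real^'n \<Rightarrow> real" where
  "QLap Q g x = (\<Sum>i\<in>UNIV. \<Sum>j\<in>UNIV. Q $ i $ j * pdiff i (pdiff j g) x)"

definition bias_vec :: "real^'n^'n \<Rightarrow> nat \<Rightarrow> (real^'n::finite \<Rightarrow> real) \<Rightarrow> real^'n \<Rightarrow> real^'n" where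
  "bias_vec Q q g x = (\<chi> k. pdiff k ((QLap Q ^^ (q div 2)) g) x)"

end

theory Submission
  imports Defs
begin


definition prodx :: "real^'n::finite \<Rightarrow> 'n list \<Rightarrow> real" where
  "prodx h js = prod_list (map (\<lambda>j. h $ j) js)"

lemma prodx_simps[simp]: "prodx h [] = 1" "prodx h (a # js) = h $ a * prodx h js"
  by (simp_all add: prodx_def)

fun lsum :: "nat \<Rightarrow> ('n::finite list \<Rightarrow> real) \<Rightarrow> real" where
  "lsum 0 F = F []"
| "lsum (Suc n) F = (\<Sum>a\<in>UNIV. lsum n (\<lambda>js. F (a # js)))"

declare lsum.simps(2)[simp del]
lemmas lsum_Suc = lsum.simps(2)

lemma lsum_cong: "(\<And>js. length js = n \<Longrightarrow> F js = G js) \<Longrightarrow> lsum n F = lsum n G"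
proof (induction n arbitrary: F G)
  case 0 then show ?case by simp
next
  case (Suc n)
  show ?case by (auto simp: lsum_Suc intro!: sum.cong Suc.IH Suc.prems)
qed

lemma lsum_add: "lsum n (\<lambda>js. F js + G js) = lsum n F + lsum n G"
  by (induction n arbitrary: F G) (auto simp: sum.distrib lsum_Suc)

lemma lsum_diff: "lsum n (\<lambda>js. F js - G js) = lsum n F - lsum n G"
  by (induction n arbitrary: F G) (auto simp: sum_subtractf lsum_Suc)

lemma lsum_cmult: "lsum n (\<lambda>js. c * F js) = c * lsum n F"
  by (induction n arbitrary: F) (auto simp: sum_distrib_left lsum_Suc)

lemma lsum_sum: "lsum n (\<lambda>js. \<Sum>i\<in>I. F i js) = (\<Sum>i\<in>I. lsum n (F i))"
proof (induction n arbitrary: F)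
  case 0 then show ?case by simp
next
  case (Suc n)
  have "lsum (Suc n) (\<lambda>js. \<Sum>i\<in>I. F i js) = (\<Sum>a\<in>UNIV. \<Sum>i\<in>I. lsum n (\<lambda>js. F i (a # js)))"
    using Suc.IH[of "\<lambda>i js. F i (_ # js)"] by (simp add: lsum_Suc)
  also have "\<dots> = (\<Sum>i\<in>I. lsum (Suc n) (F i))"
    by (simp add: sum.swap[of _ UNIV] lsum_Suc)
  finally show ?case .
qed

lemma lsum_deriv:
  assumes "\<And>js. length js = n \<Longrightarrow> ((\<lambda>t. F js t) has_real_derivative F' js) (at t0)"
  shows "((\<lambda>t. lsum n (\<lambda>js. F js t)) has_real_derivative lsum n F') (at t0)"
  using assms
proof (induction n arbitrary: F F')
  case 0 then show ?case by simp
next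
  case (Suc n)
  show ?case
    by (simp add: lsum_Suc, rule DERIV_sum, rule Suc.IH[of "\<lambda>js. F (_ # js)"], rule Suc.prems, simp)
qed

definition symm :: "nat \<Rightarrow> ('n list \<Rightarrow> 'b) \<Rightarrow> bool" where
  "symm n D \<longleftrightarrow> (\<forall>xs ys. length xs = n \<longrightarrow> mset xs = mset ys \<longrightarrow> D xs = D ys)"

lemma symm_cons: "symm (Suc n) D \<Longrightarrow> symm n (\<lambda>js. D (a # js))"
  unfolding symm_def by auto

lemma symm_diff: "symm n D \<Longrightarrow> symm n E \<Longrightarrow> symm n (\<lambda>js. D js - E js)"
  unfolding symm_def by metis

lemma symm_swap: "symm (Suc (Suc m)) D \<Longrightarrow> length js = m \<Longrightarrow> D (a # b # js) = D (b # a # js)"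
  unfolding symm_def by (simp add: add_mset_commute)

fun Rd :: "real^'n::finite \<Rightarrow> 'n \<Rightarrow> 'n list \<Rightarrow> real" where
  "Rd x i [] = 0"
| "Rd x i (a # js) = (if a = i then 1 else 0) * prodx x js + x $ a * Rd x i js"

lemma prodx_deriv:
  fixes x :: "real^'n::finite"
  shows "((\<lambda>t. prodx (x + t *\<^sub>R axis i 1) js) has_real_derivative Rd x i js) (at 0)"
proof (induction js)
  case Nil then show ?case by simp
next
  case (Cons a js)
  have 1: "((\<lambda>t. x $ a + t * (axis i 1 :: real^'n) $ a) has_real_derivative (axis i 1 :: real^'n) $ a) (at 0)"
    by (auto intro!: derivative_eq_intros)
  from DERIV_mult[OF 1 Cons.IH]
  show ?case by (simp add: axis_def algebra_simps)
qed

lemma Rd_lsum: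
  assumes "symm (Suc m) D"
  shows "lsum (Suc m) (\<lambda>js. D js * Rd x i js) = real (Suc m) * lsum m (\<lambda>js. D (i # js) * prodx x js)"
  using assms
proof (induction m arbitrary: D)
  case 0
  have "lsum (Suc 0) (\<lambda>js. D js * Rd x i js) = (\<Sum>a\<in>UNIV. D [a] * Rd x i [a])" by (simp add: lsum_Suc)
  moreover have "(\<Sum>a\<in>UNIV. D [a] * Rd x i [a]) = (\<Sum>a\<in>UNIV. if a = i then D [i] else 0)"
    by (rule sum.cong) auto
  ultimately show ?case by simp
next
  case (Suc m)
  have split: "lsum (Suc (Suc m)) (\<lambda>js. D js * Rd x i js) =
     (\<Sum>a\<in>UNIV. (if a = i then 1 else 0) * lsum (Suc m) (\<lambda>js. D (a # js) * prodx x js))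
     + (\<Sum>a\<in>UNIV. x $ a * lsum (Suc m) (\<lambda>js. D (a # js) * Rd x i js))"
  proof -
    have "lsum (Suc (Suc m)) (\<lambda>js. D js * Rd x i js) = (\<Sum>a\<in>UNIV. lsum (Suc m) (\<lambda>js. D (a # js) * Rd x i (a # js)))"
      by (rule lsum_Suc)
    also have "\<dots> = (\<Sum>a\<in>UNIV. lsum (Suc m) (\<lambda>js. (if a = i then 1 else 0) * (D (a # js) * prodx x js)
        + x $ a * (D (a # js) * Rd x i js)))"
      by (rule sum.cong[OF refl], rule lsum_cong) (simp add: algebra_simps)
    also have "\<dots> = (\<Sum>a\<in>UNIV. (if a = i then 1 else 0) * lsum (Suc m) (\<lambda>js. D (a # js) * prodx x js))
     + (\<Sum>a\<in>UNIV. x $ a * lsum (Suc m) (\<lambda>js. D (a # js) * Rd x i js))"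
      by (simp only: lsum_add lsum_cmult sum.distrib)
    finally show ?thesis .
  qed
  have IH: "lsum (Suc m) (\<lambda>js. D (a # js) * Rd x i js) = real (Suc m) * lsum m (\<lambda>js. D (i # a # js) * prodx x js)" for a
  proof -
    have "lsum (Suc m) (\<lambda>js. D (a # js) * Rd x i js) = real (Suc m) * lsum m (\<lambda>js. D (a # i # js) * prodx x js)"
      using Suc.IH[OF symm_cons[OF Suc.prems]] .
    also have "lsum m (\<lambda>js. D (a # i # js) * prodx x js) = lsum m (\<lambda>js. D (i # a # js) * prodx x js)"
      using symm_swap[OF Suc.prems] by (intro lsum_cong) simp
    finally show ?thesis .
  qed
  have "(\<Sum>a\<in>UNIV. x $ a * lsum (Suc m) (\<lambda>js. D (a # js) * Rd x i js))
      = real (Suc m) * lsum (Suc m) (\<lambda>js. D (i # js) * prodx x js)"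
  proof -
    have "lsum (Suc m) (\<lambda>js. D (i # js) * prodx x js) = (\<Sum>a\<in>UNIV. x $ a * lsum m (\<lambda>js. D (i # a # js) * prodx x js))"
      by (simp only: lsum_Suc prodx_simps lsum_cmult[symmetric] mult_ac)
    moreover have "(\<Sum>a\<in>UNIV. x $ a * lsum (Suc m) (\<lambda>js. D (a # js) * Rd x i js))
       = (\<Sum>a\<in>UNIV. real (Suc m) * (x $ a * lsum m (\<lambda>js. D (i # a # js) * prodx x js)))"
      by (rule sum.cong[OF refl]) (simp only: IH, simp only: mult_ac)
    ultimately show ?thesis by (simp only: sum_distrib_left[symmetric])
  qed
  moreover have "(\<Sum>a\<in>UNIV. (if a = i then 1 else 0) * lsum (Suc m) (\<lambda>js. D (a # js) * prodx x js))
      = lsum (Suc m) (\<lambda>js. D (i # js) * prodx x js)"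
  proof -
    have "(\<Sum>a\<in>UNIV. (if a = i then 1 else 0) * lsum (Suc m) (\<lambda>js. D (a # js) * prodx x js))
      = (\<Sum>a\<in>UNIV. if a = i then lsum (Suc m) (\<lambda>js. D (i # js) * prodx x js) else 0)"
      by (rule sum.cong) auto
    then show ?thesis by (simp)
  qed
  ultimately show ?case using split by (simp add: algebra_simps)
qed

lemma polarization:
  assumes "symm n D" "\<And>x. lsum n (\<lambda>js. D js * prodx x js) = 0" "length js = n"
  shows "D js = 0"
  using assms
proof (induction n arbitrary: D js)
  case 0
  then show ?case using "0.prems"(2)[of 0] by simp
next
  case (Suc n)
  then obtain i js' where js: "js = i # js'" "length js' = n" by (cases js) auto
  have "lsum n (\<lambda>js. D (i # js) * prodx x js) = 0" for x
  proof -
    have d1: "((\<lambda>t. lsum (Suc n) (\<lambda>js. D js * prodx (x + t *\<^sub>R axis i 1) js)) has_real_derivative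
        lsum (Suc n) (\<lambda>js. D js * Rd x i js)) (at 0)"
      by (rule lsum_deriv) (auto intro!: DERIV_cmult prodx_deriv)
    have eq: "(\<lambda>t. lsum (Suc n) (\<lambda>js. D js * prodx (x + t *\<^sub>R axis i 1) js)) = (\<lambda>t. 0)"
      by (rule ext) (rule Suc.prems(2))
    have d2: "((\<lambda>t. lsum (Suc n) (\<lambda>js. D js * prodx (x + t *\<^sub>R axis i 1) js)) has_real_derivative 0) (at 0)"
      unfolding eq by simp
    have "lsum (Suc n) (\<lambda>js. D js * Rd x i js) = 0"
      using DERIV_unique[OF d1 d2] .
    then show ?thesis using Rd_lsum[OF Suc.prems(1)] by simp
  qed
  then have "(\<lambda>js. D (i # js)) js' = 0"
    by (intro Suc.IH[OF symm_cons[OF Suc.prems(1)]]) (auto simp: js)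
  then show ?case using js by simp
qed



lemma perm_by_swaps_move:
  fixes F :: "'a list \<Rightarrow> 'b" and op :: "'a \<Rightarrow> 'b \<Rightarrow> 'b"
  assumes cons: "\<And>a xs. F (a # xs) = op a (F xs)"
    and swap: "\<And>a b xs. length xs + 2 \<le> N \<Longrightarrow> F (a # b # xs) = F (b # a # xs)"
  shows "length (zs @ x # ws) \<le> N \<Longrightarrow> F (zs @ x # ws) = F (x # zs @ ws)"
proof (induction zs)
  case Nil then show ?case by simp
next
  case (Cons z zs)
  have "F ((z # zs) @ x # ws) = op z (F (zs @ x # ws))" by (simp add: cons)
  also have "\<dots> = op z (F (x # zs @ ws))" using Cons by simp
  also have "\<dots> = F (z # x # zs @ ws)" by (simp add: cons)
  also have "\<dots> = F (x # z # zs @ ws)" using Cons.prems by (intro swap) simp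
  finally show ?case by simp
qed

lemma perm_by_swaps:
  fixes F :: "'a list \<Rightarrow> 'b" and op :: "'a \<Rightarrow> 'b \<Rightarrow> 'b"
  assumes cons: "\<And>a xs. F (a # xs) = op a (F xs)"
    and swap: "\<And>a b xs. length xs + 2 \<le> N \<Longrightarrow> F (a # b # xs) = F (b # a # xs)"
  shows "mset xs = mset ys \<Longrightarrow> length xs \<le> N \<Longrightarrow> F xs = F ys"
proof (induction xs arbitrary: ys)
  case Nil then show ?case by simp
next
  case (Cons x xs)
  have "x \<in> set ys" using Cons.prems(1) by (metis list.set_intros(1) set_mset_mset)
  then obtain ys1 ys2 where ys: "ys = ys1 @ x # ys2" by (meson split_list)
  have ms: "mset xs = mset (ys1 @ ys2)" using Cons.prems(1) ys by simp
  have len: "length ys = length (x # xs)" using Cons.prems(1) by (metis size_mset)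
  have "F (x # xs) = op x (F xs)" by (rule cons)
  also have "\<dots> = op x (F (ys1 @ ys2))" using Cons.IH[OF ms] Cons.prems(2) by simp
  also have "\<dots> = F (x # ys1 @ ys2)" by (simp add: cons)
  also have "\<dots> = F ys" unfolding ys
    by (rule perm_by_swaps_move[where F=F and op=op and N=N, OF cons swap, symmetric]) (use len Cons.prems(2) ys in auto)
  finally show ?case .
qed

fun Sy :: "(nat \<Rightarrow> real^'n::finite) \<Rightarrow> nat set \<Rightarrow> 'n list \<Rightarrow> real" where
  "Sy a I [] = 1"
| "Sy a I (j # js) = (\<Sum>i\<in>I. a i $ j * Sy a (I - {i}) js)"

lemma sum_pairs_swap:
  fixes H :: "nat \<Rightarrow> nat \<Rightarrow> real"
  shows "(\<Sum>i\<in>I. \<Sum>k\<in>I - {i}. H i k) = (\<Sum>k\<in>I. \<Sum>i\<in>I - {k}. H i k)"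
proof (cases "finite I")
  case True
  have 1: "(\<Sum>i\<in>I. \<Sum>k\<in>I - {i}. H i k) = (\<Sum>i\<in>I. \<Sum>k\<in>I. H i k) - (\<Sum>i\<in>I. H i i)"
    using True by (simp add: sum_diff1 sum_subtractf)
  have 2: "(\<Sum>k\<in>I. \<Sum>i\<in>I - {k}. H i k) = (\<Sum>k\<in>I. \<Sum>i\<in>I. H i k) - (\<Sum>k\<in>I. H k k)"
    using True by (simp add: sum_diff1 sum_subtractf)
  show ?thesis unfolding 1 2 by (subst sum.swap) (rule refl)
next
  case False then show ?thesis by simp
qed

lemma Sy_swap: "Sy a I (j # k # xs) = Sy a I (k # j # xs)"
proof -
  have "Sy a I (j # k # xs) = (\<Sum>i\<in>I. \<Sum>i'\<in>I - {i}. a i $ j * a i' $ k * Sy a (I - {i} - {i'}) xs)"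
    by (simp add: sum_distrib_left mult_ac)
  also have "\<dots> = (\<Sum>i'\<in>I. \<Sum>i\<in>I - {i'}. a i $ j * a i' $ k * Sy a (I - {i} - {i'}) xs)"
    by (rule sum_pairs_swap)
  also have "\<dots> = Sy a I (k # j # xs)"
    by (simp add: sum_distrib_left mult_ac Diff_insert2[symmetric] insert_commute)
  finally show ?thesis .
qed

lemma Sy_symm: "symm n (Sy a I)"
proof -
  have "Sy a I xs = Sy a I ys" if "mset xs = mset ys" for xs ys
  proof -
    have "(\<lambda>I. Sy a I xs) = (\<lambda>I. Sy a I ys)"
    proof (rule perm_by_swaps[where op = "\<lambda>j \<Phi> I. \<Sum>i\<in>I. a i $ j * \<Phi> (I - {i})" and N = "length xs"])
      show "\<And>b xs. (\<lambda>I. Sy a I (b # xs)) = (\<lambda>I. \<Sum>i\<in>I. a i $ b * (\<lambda>I. Sy a I xs) (I - {i}))"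
        by simp
      show "\<And>b c zs. (\<lambda>I. Sy a I (b # c # zs)) = (\<lambda>I. Sy a I (c # b # zs))"
        by (rule ext, rule Sy_swap)
    qed (use that in auto)
    then show ?thesis by metis
  qed
  then show ?thesis unfolding symm_def by blast
qed

lemma Sy_diag:
  assumes "finite I" "card I = n"
  shows "lsum n (\<lambda>js. prodx h js * Sy a I js) = fact n * (\<Prod>i\<in>I. a i \<bullet> h)"
  using assms
proof (induction n arbitrary: I)
  case 0 then show ?case by simp
next
  case (Suc n)
  have IH: "lsum n (\<lambda>js. prodx h js * Sy a (I - {i}) js) = fact n * (\<Prod>k\<in>I - {i}. a k \<bullet> h)" if "i \<in> I" for i
    using Suc.IH[of "I - {i}"] Suc.prems that by simp
  have "lsum (Suc n) (\<lambda>js. prodx h js * Sy a I js)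
      = (\<Sum>b\<in>UNIV. lsum n (\<lambda>js. \<Sum>i\<in>I. (h $ b * a i $ b) * (prodx h js * Sy a (I - {i}) js)))"
    by (simp add: lsum_Suc sum_distrib_left mult_ac)
  also have "\<dots> = (\<Sum>b\<in>UNIV. \<Sum>i\<in>I. (h $ b * a i $ b) * lsum n (\<lambda>js. prodx h js * Sy a (I - {i}) js))"
    by (simp add: lsum_sum lsum_cmult)
  also have "\<dots> = (\<Sum>i\<in>I. (\<Sum>b\<in>UNIV. h $ b * a i $ b) * (fact n * (\<Prod>k\<in>I - {i}. a k \<bullet> h)))"
    by (simp add: sum.swap[of _ UNIV] sum_distrib_right IH)
  also have "\<dots> = (\<Sum>i\<in>I. fact n * (\<Prod>k\<in>I. a k \<bullet> h))"
  proof (rule sum.cong[OF refl])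
    fix i assume i: "i \<in> I"
    have "(\<Sum>b\<in>UNIV. h $ b * a i $ b) = a i \<bullet> h" by (simp add: inner_vec_def mult.commute)
    then show "(\<Sum>b\<in>UNIV. h $ b * a i $ b) * (fact n * (\<Prod>k\<in>I - {i}. a k \<bullet> h)) = fact n * (\<Prod>k\<in>I. a k \<bullet> h)"
      using prod.remove[OF Suc.prems(1) i, of "\<lambda>k. a k \<bullet> h"] by simp
  qed
  also have "\<dots> = fact (Suc n) * (\<Prod>k\<in>I. a k \<bullet> h)"
    using Suc.prems by (simp add: algebra_simps)
  finally show ?case .
qed

fun Lsum :: "real^'n^'n \<Rightarrow> nat \<Rightarrow> ('n::finite list \<Rightarrow> real) \<Rightarrow> real" where
  "Lsum Q 0 F = F []"
| "Lsum Q (Suc r) F = (\<Sum>i\<in>UNIV. \<Sum>j\<in>UNIV. Q $ i $ j * Lsum Q r (\<lambda>js. F (i # j # js)))"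

declare Lsum.simps(2)[simp del]
lemmas Lsum_Suc = Lsum.simps(2)

lemma Lsum_cong: "(\<And>js. length js = 2 * r \<Longrightarrow> F js = G js) \<Longrightarrow> Lsum Q r F = Lsum Q r G"
proof (induction r arbitrary: F G)
  case 0 then show ?case by simp
next
  case (Suc r)
  show ?case by (auto simp: Lsum_Suc intro!: sum.cong Suc.IH Suc.prems)
qed

lemma Lsum_cmult: "Lsum Q r (\<lambda>js. c * F js) = c * Lsum Q r F"
  by (induction r arbitrary: F) (auto simp: sum_distrib_left Lsum_Suc mult_ac)

lemma Lsum_sum: "Lsum Q r (\<lambda>js. \<Sum>i\<in>I. F i js) = (\<Sum>i\<in>I. Lsum Q r (F i))"
proof (induction r arbitrary: F)
  case 0 then show ?case by simp
next
  case (Suc r)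
  have "Lsum Q (Suc r) (\<lambda>js. \<Sum>i\<in>I. F i js) = (\<Sum>a\<in>UNIV. \<Sum>b\<in>UNIV. Q $ a $ b * (\<Sum>i\<in>I. Lsum Q r (\<lambda>js. F i (a # b # js))))"
    using Suc.IH[of "\<lambda>i js. F i (_ # _ # js)"] by (simp add: Lsum_Suc)
  also have "\<dots> = (\<Sum>i\<in>I. Lsum Q (Suc r) (F i))"
    by (simp add: Lsum_Suc sum_distrib_left sum.swap[of _ I])
  finally show ?case .
qed

lemma Lsum_deriv:
  assumes "\<And>js. length js = 2 * r \<Longrightarrow> ((\<lambda>t. F js t) has_real_derivative F' js) (at t0)"
  shows "((\<lambda>t. Lsum Q r (\<lambda>js. F js t)) has_real_derivative Lsum Q r F') (at t0)"
  using assms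
proof (induction r arbitrary: F F')
  case 0 then show ?case by simp
next
  case (Suc r)
  show ?case
    by (simp add: Lsum_Suc, intro DERIV_sum DERIV_cmult, rule Suc.IH[of "\<lambda>js. F (_ # _ # js)"], rule Suc.prems, simp)
qed

definition Bq :: "real^'n^'n \<Rightarrow> real^'n::finite \<Rightarrow> real^'n \<Rightarrow> real" where
  "Bq Q x y = (\<Sum>i\<in>UNIV. \<Sum>j\<in>UNIV. Q $ i $ j * x $ i * y $ j)"

lemma Lsum_Sy:
  assumes B: "\<And>u v. u \<in> Iz \<Longrightarrow> v \<in> Iz \<Longrightarrow> u \<noteq> v \<Longrightarrow> Bq Q (a u) (a v) = c / (s u * s v)"
    and s: "\<And>u. u \<in> Iz \<Longrightarrow> s u \<noteq> 0"
    and J: "J \<subseteq> Iz" "finite J" "card J = 2 * r"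
  shows "Lsum Q r (Sy a J) = c ^ r * fact (2 * r) * (\<Prod>u\<in>J. 1 / s u)"
  using J
proof (induction r arbitrary: J)
  case 0 then show ?case by simp
next
  case (Suc r)
  have IH: "Lsum Q r (Sy a (J - {u} - {v})) = c ^ r * fact (2 * r) * (\<Prod>w\<in>J - {u} - {v}. 1 / s w)"
    if "u \<in> J" "v \<in> J - {u}" for u v
  proof -
    have "J - {u} - {v} \<subseteq> Iz" using Suc.prems(1) by blast
    then show ?thesis using Suc.IH[of "J - {u} - {v}"] Suc.prems that by (simp add: card_Diff_singleton_if)
  qed
  have "Lsum Q (Suc r) (Sy a J) = (\<Sum>i\<in>UNIV. \<Sum>j\<in>UNIV. Q $ i $ j *
      (\<Sum>u\<in>J. \<Sum>v\<in>J - {u}. a u $ i * a v $ j * Lsum Q r (Sy a (J - {u} - {v}))))"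
    by (simp add: Lsum_Suc Lsum_sum Lsum_cmult sum_distrib_left mult_ac)
  also have "\<dots> = (\<Sum>u\<in>J. \<Sum>v\<in>J - {u}. Bq Q (a u) (a v) * Lsum Q r (Sy a (J - {u} - {v})))"
    unfolding Bq_def
    by (simp add: sum_distrib_left sum_distrib_right sum.swap[of _ J] sum.swap[of _ "J - _"] mult_ac)
  also have "\<dots> = (\<Sum>u\<in>J. \<Sum>v\<in>J - {u}. c ^ Suc r * fact (2 * r) * (\<Prod>w\<in>J. 1 / s w))"
  proof (intro sum.cong refl)
    fix u v assume u: "u \<in> J" and v: "v \<in> J - {u}"
    have "(\<Prod>w\<in>J. 1 / s w) = (1 / s u) * (1 / s v) * (\<Prod>w\<in>J - {u} - {v}. 1 / s w)"
      using prod.remove[OF Suc.prems(2) u, of "\<lambda>w. 1 / s w"]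
        prod.remove[of "J - {u}" v "\<lambda>w. 1 / s w"] Suc.prems(2) v by simp
    then show "Bq Q (a u) (a v) * Lsum Q r (Sy a (J - {u} - {v})) = c ^ Suc r * fact (2 * r) * (\<Prod>w\<in>J. 1 / s w)"
    proof -
      have "u \<in> Iz" "v \<in> Iz" using u v Suc.prems(1) by auto
      then have "Bq Q (a u) (a v) = c / (s u * s v)" using B[of u v] v by auto
      then show ?thesis using IH[OF u v] \<open>(\<Prod>w\<in>J. 1 / s w) = _\<close> by simp
    qed
  qed
  also have "\<dots> = real (card J) * (real (card J) - 1) * (c ^ Suc r * fact (2 * r) * (\<Prod>w\<in>J. 1 / s w))"
    using Suc.prems by (simp add: card_Diff_singleton_if of_nat_diff algebra_simps)
  also have "\<dots> = c ^ Suc r * fact (2 * Suc r) * (\<Prod>u\<in>J. 1 / s u)"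
    using Suc.prems by (simp add: algebra_simps)
  finally show ?case .
qed



lemma mvt_any:
  fixes \<phi> :: "real \<Rightarrow> real"
  assumes "\<And>u. (\<phi> has_real_derivative \<phi>' u) (at u)"
  shows "\<exists>\<xi>. \<bar>\<xi>\<bar> \<le> \<bar>b\<bar> \<and> \<phi> b - \<phi> 0 = b * \<phi>' \<xi>"
proof (cases "b = 0")
  case True then show ?thesis by (intro exI[of _ 0]) simp
next
  case False
  show ?thesis
  proof (cases "b > 0")
    case True
    from MVT2[OF True, of \<phi> \<phi>'] assms obtain z where "0 < z" "z < b" "\<phi> b - \<phi> 0 = (b - 0) * \<phi>' z"
      by blast
    then show ?thesis by (intro exI[of _ z]) auto
  next
    case False
    with \<open>b \<noteq> 0\<close> have "b < 0" by simp
    from MVT2[OF this, of \<phi> \<phi>'] assms obtain z where "b < z" "z < 0" "\<phi> 0 - \<phi> b = (0 - b) * \<phi>' z"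
      by blast
    then show ?thesis by (intro exI[of _ z]) (auto simp: algebra_simps)
  qed
qed

lemma deriv_shift_line:
  fixes G :: "'a::real_normed_vector \<Rightarrow> real"
  assumes "\<And>y. ((\<lambda>t. G (y + t *\<^sub>R v)) has_real_derivative DG y) (at 0)"
  shows "((\<lambda>t. G (x + t *\<^sub>R v)) has_real_derivative DG (x + t0 *\<^sub>R v)) (at t0)"
proof -
  have "((\<lambda>u. G ((x + t0 *\<^sub>R v) + u *\<^sub>R v)) has_real_derivative DG (x + t0 *\<^sub>R v)) (at 0)"
    by (rule assms)
  then have "((\<lambda>u. G (x + (u + t0) *\<^sub>R v)) has_real_derivative DG (x + t0 *\<^sub>R v)) (at 0)"
    by (simp add: algebra_simps scaleR_add_left)
  then show ?thesis using DERIV_shift[of "\<lambda>t. G (x + t *\<^sub>R v)" _ 0 t0] by simp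
qed

lemma axis_sum_expand:
  fixes h :: "real^'n::finite"
  shows "(\<Sum>i\<in>UNIV. h $ i *\<^sub>R axis i 1) = h"
proof -
  have "(\<Sum>x\<in>UNIV. h $ x * (if i = x then 1 else 0)) = h $ i" for i
  proof -
    have "(\<Sum>x\<in>UNIV. h $ x * (if i = x then 1 else 0)) = (\<Sum>x\<in>UNIV. if i = x then h $ x else 0)"
      by (rule sum.cong) auto
    then show ?thesis by simp
  qed
  then show ?thesis by (simp add: vec_eq_iff axis_def sum_component)
qed

lemma dir_deriv:
  fixes G :: "real^'n::finite \<Rightarrow> real" and DG :: "'n \<Rightarrow> real^'n \<Rightarrow> real"
  assumes der: "\<And>i x. ((\<lambda>t. G (x + t *\<^sub>R axis i 1)) has_real_derivative DG i x) (at 0)"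
    and cont: "\<And>i. continuous_on UNIV (DG i)"
  shows "((\<lambda>t. G (y + t *\<^sub>R h)) has_real_derivative (\<Sum>i\<in>UNIV. h $ i * DG i y)) (at 0)"
proof -
  have main: "((\<lambda>t. G (y + t *\<^sub>R (\<Sum>i\<in>S. h $ i *\<^sub>R axis i 1))) has_real_derivative (\<Sum>i\<in>S. h $ i * DG i y)) (at 0)"
    if "finite S" for S
    using that
  proof (induction S rule: finite_induct)
    case empty
    then show ?case by simp
  next
    case (insert k S)
    define hS :: "real^'n" where "hS = (\<Sum>i\<in>S. h $ i *\<^sub>R axis i 1)"
    define e where "e = (axis k 1 :: real^'n)"
    define D where "D t = G (y + t *\<^sub>R hS + (t * h $ k) *\<^sub>R e) - G (y + t *\<^sub>R hS)" for t
    have eq: "(\<lambda>t. G (y + t *\<^sub>R (\<Sum>i\<in>insert k S. h $ i *\<^sub>R axis i 1))) = (\<lambda>t. D t + G (y + t *\<^sub>R hS))"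
      using insert by (auto simp: D_def hS_def e_def algebra_simps scaleR_add_right)
    have D0: "D 0 = 0" by (simp add: D_def)
    have "(D has_real_derivative h $ k * DG k y) (at 0)"
    proof -
      have lim: "(\<lambda>t. (D t - D 0) / (t - 0)) \<midarrow>0\<rightarrow> h $ k * DG k y"
        unfolding LIM_eq
      proof (intro allI impI)
        fix r :: real assume r: "r > 0"
        have "isCont (DG k) y" using cont continuous_on_eq_continuous_at by blast
        moreover have "r / (\<bar>h $ k\<bar> + 1) > 0" using r by simp
        ultimately obtain \<delta> where \<delta>: "\<delta> > 0" "\<And>z. dist z y < \<delta> \<Longrightarrow> dist (DG k z) (DG k y) < r / (\<bar>h $ k\<bar> + 1)"
          unfolding continuous_at_eps_delta by blast
        define s where "s = \<delta> / (norm hS + \<bar>h $ k\<bar> + 1)"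
        have s: "s > 0" using \<delta> by (simp add: s_def add_nonneg_pos)
        show "\<exists>s>0. \<forall>t. t \<noteq> 0 \<and> norm (t - 0) < s \<longrightarrow> norm ((D t - D 0) / (t - 0) - h $ k * DG k y) < r"
        proof (intro exI[of _ s] conjI allI impI s)
          fix t :: real assume t: "t \<noteq> 0 \<and> norm (t - 0) < s"
          have dd: "\<And>u. ((\<lambda>u. G (y + t *\<^sub>R hS + u *\<^sub>R e)) has_real_derivative DG k (y + t *\<^sub>R hS + u *\<^sub>R e)) (at u)"
            by (rule deriv_shift_line) (use der in \<open>simp add: e_def\<close>)
          obtain \<xi> where \<xi>: "\<bar>\<xi>\<bar> \<le> \<bar>t * h $ k\<bar>"
            and mv: "G (y + t *\<^sub>R hS + (t * h $ k) *\<^sub>R e) - G (y + t *\<^sub>R hS + 0 *\<^sub>R e)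
               = (t * h $ k) * DG k (y + t *\<^sub>R hS + \<xi> *\<^sub>R e)"
            using mvt_any[OF dd, of "t * h $ k"] by blast
          have Dt: "D t = (t * h $ k) * DG k (y + t *\<^sub>R hS + \<xi> *\<^sub>R e)"
            using mv by (simp add: D_def)
          have ne: "norm e = 1" by (simp add: e_def)
          have "norm (t *\<^sub>R hS + \<xi> *\<^sub>R e) \<le> \<bar>t\<bar> * norm hS + \<bar>\<xi>\<bar>"
            using norm_triangle_ineq[of "t *\<^sub>R hS" "\<xi> *\<^sub>R e"] ne by simp
          also have "\<dots> \<le> \<bar>t\<bar> * (norm hS + \<bar>h $ k\<bar>)"
            using \<xi> by (simp add: abs_mult algebra_simps)
          also have "\<dots> \<le> \<bar>t\<bar> * (norm hS + \<bar>h $ k\<bar> + 1)"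
            by (simp add: mult_left_mono)
          also have "\<dots> < s * (norm hS + \<bar>h $ k\<bar> + 1)"
            using t by (intro mult_strict_right_mono) (auto simp: add_nonneg_pos)
          also have "\<dots> = \<delta>"
          proof -
            have "norm hS + \<bar>h $ k\<bar> + 1 > 0" by (simp add: add_nonneg_pos)
            then show ?thesis by (simp add: s_def)
          qed
          finally have "dist (y + t *\<^sub>R hS + \<xi> *\<^sub>R e) y < \<delta>"
            by (simp add: dist_norm)
          then have c: "\<bar>DG k (y + t *\<^sub>R hS + \<xi> *\<^sub>R e) - DG k y\<bar> < r / (\<bar>h $ k\<bar> + 1)"
            using \<delta>(2) by (simp add: dist_real_def)
          have "(D t - D 0) / (t - 0) - h $ k * DG k y = h $ k * (DG k (y + t *\<^sub>R hS + \<xi> *\<^sub>R e) - DG k y)"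
            using t by (simp add: Dt D0 algebra_simps)
          also have "\<bar>\<dots>\<bar> \<le> \<bar>h $ k\<bar> * (r / (\<bar>h $ k\<bar> + 1))"
            using c unfolding abs_mult by (intro mult_left_mono) auto
          also have "\<dots> < r"
            using r by (simp add: field_simps)
          finally show "norm ((D t - D 0) / (t - 0) - h $ k * DG k y) < r" by simp
        qed
      qed
      then show ?thesis by (simp add: has_field_derivative_iff)
    qed
    then have "((\<lambda>t. D t + G (y + t *\<^sub>R hS)) has_real_derivative h $ k * DG k y + (\<Sum>i\<in>S. h $ i * DG i y)) (at 0)"
      using insert.IH unfolding hS_def by (rule DERIV_add)
    then show ?case unfolding eq using insert by simp
  qed
  show ?thesis using main[of UNIV, unfolded axis_sum_expand] by simp
qed

lemma schwarz_aux:
  fixes G Gi Gij :: "'a::real_normed_vector \<Rightarrow> real"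
  assumes di: "\<And>x. ((\<lambda>t. G (x + t *\<^sub>R ei)) has_real_derivative Gi x) (at 0)"
    and dij: "\<And>x. ((\<lambda>t. Gi (x + t *\<^sub>R ej)) has_real_derivative Gij x) (at 0)"
    and n: "norm ei \<le> 1" "norm ej \<le> 1"
  shows "\<exists>p. norm (p - x) \<le> 2 * \<bar>s\<bar> \<and>
     G (x + s *\<^sub>R ei + s *\<^sub>R ej) - G (x + s *\<^sub>R ei) - G (x + s *\<^sub>R ej) + G x = s * s * Gij p"
proof -
  define \<phi> where "\<phi> u = G (x + s *\<^sub>R ej + u *\<^sub>R ei) - G (x + u *\<^sub>R ei)" for u
  have d\<phi>: "(\<phi> has_real_derivative (Gi (x + s *\<^sub>R ej + u *\<^sub>R ei) - Gi (x + u *\<^sub>R ei))) (at u)" for u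
    unfolding \<phi>_def
    by (intro DERIV_diff deriv_shift_line[where DG=Gi] di)
  obtain \<xi> where \<xi>: "\<bar>\<xi>\<bar> \<le> \<bar>s\<bar>" and m1: "\<phi> s - \<phi> 0 = s * (Gi (x + s *\<^sub>R ej + \<xi> *\<^sub>R ei) - Gi (x + \<xi> *\<^sub>R ei))"
    using mvt_any[OF d\<phi>, of s] by blast
  define \<psi> where "\<psi> v = Gi (x + \<xi> *\<^sub>R ei + v *\<^sub>R ej)" for v
  have d\<psi>: "(\<psi> has_real_derivative Gij (x + \<xi> *\<^sub>R ei + v *\<^sub>R ej)) (at v)" for v
    unfolding \<psi>_def by (intro deriv_shift_line[where DG=Gij] dij)
  obtain \<eta> where \<eta>: "\<bar>\<eta>\<bar> \<le> \<bar>s\<bar>" and m2: "\<psi> s - \<psi> 0 = s * Gij (x + \<xi> *\<^sub>R ei + \<eta> *\<^sub>R ej)"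
    using mvt_any[OF d\<psi>, of s] by blast
  have "G (x + s *\<^sub>R ei + s *\<^sub>R ej) - G (x + s *\<^sub>R ei) - G (x + s *\<^sub>R ej) + G x = \<phi> s - \<phi> 0"
    by (simp add: \<phi>_def algebra_simps)
  also have "\<dots> = s * (\<psi> s - \<psi> 0)"
    using m1 by (simp add: \<psi>_def algebra_simps)
  also have "\<dots> = s * s * Gij (x + \<xi> *\<^sub>R ei + \<eta> *\<^sub>R ej)"
    using m2 by simp
  finally have eq: "G (x + s *\<^sub>R ei + s *\<^sub>R ej) - G (x + s *\<^sub>R ei) - G (x + s *\<^sub>R ej) + G x
      = s * s * Gij (x + \<xi> *\<^sub>R ei + \<eta> *\<^sub>R ej)" .
  have "norm ((x + \<xi> *\<^sub>R ei + \<eta> *\<^sub>R ej) - x) \<le> \<bar>\<xi>\<bar> * norm ei + \<bar>\<eta>\<bar> * norm ej"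
    using norm_triangle_ineq[of "\<xi> *\<^sub>R ei" "\<eta> *\<^sub>R ej"] by simp
  also have "\<dots> \<le> \<bar>\<xi>\<bar> + \<bar>\<eta>\<bar>"
    using n by (intro add_mono) (auto simp: mult_left_le)
  also have "\<dots> \<le> 2 * \<bar>s\<bar>" using \<xi> \<eta> by simp
  finally show ?thesis using eq by blast
qed

lemma schwarz:
  fixes G Gi Gj Gij Gji :: "'a::real_normed_vector \<Rightarrow> real"
  assumes di: "\<And>x. ((\<lambda>t. G (x + t *\<^sub>R ei)) has_real_derivative Gi x) (at 0)"
    and dj: "\<And>x. ((\<lambda>t. G (x + t *\<^sub>R ej)) has_real_derivative Gj x) (at 0)"
    and dij: "\<And>x. ((\<lambda>t. Gi (x + t *\<^sub>R ej)) has_real_derivative Gij x) (at 0)"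
    and dji: "\<And>x. ((\<lambda>t. Gj (x + t *\<^sub>R ei)) has_real_derivative Gji x) (at 0)"
    and cij: "continuous_on UNIV Gij" and cji: "continuous_on UNIV Gji"
    and n: "norm ei \<le> 1" "norm ej \<le> 1"
  shows "Gij x = Gji x"
proof (rule ccontr)
  assume ne: "Gij x \<noteq> Gji x"
  define \<epsilon> where "\<epsilon> = \<bar>Gij x - Gji x\<bar> / 2"
  have \<epsilon>: "\<epsilon> > 0" using ne by (simp add: \<epsilon>_def)
  have "isCont Gij x" using cij continuous_on_eq_continuous_at by blast
  then obtain d1 where d1: "d1 > 0" "\<And>z. dist z x < d1 \<Longrightarrow> dist (Gij z) (Gij x) < \<epsilon>"
    using \<epsilon> unfolding continuous_at_eps_delta by blast
  have "isCont Gji x" using cji continuous_on_eq_continuous_at by blast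
  then obtain d2 where d2: "d2 > 0" "\<And>z. dist z x < d2 \<Longrightarrow> dist (Gji z) (Gji x) < \<epsilon>"
    using \<epsilon> unfolding continuous_at_eps_delta by blast
  define s where "s = min d1 d2 / 4"
  have s: "s > 0" using d1 d2 by (simp add: s_def)
  obtain p1 where p1: "norm (p1 - x) \<le> 2 * \<bar>s\<bar>"
    and e1: "G (x + s *\<^sub>R ei + s *\<^sub>R ej) - G (x + s *\<^sub>R ei) - G (x + s *\<^sub>R ej) + G x = s * s * Gij p1"
    using schwarz_aux[OF di dij n] by blast
  obtain p2 where p2: "norm (p2 - x) \<le> 2 * \<bar>s\<bar>"
    and e2: "G (x + s *\<^sub>R ej + s *\<^sub>R ei) - G (x + s *\<^sub>R ej) - G (x + s *\<^sub>R ei) + G x = s * s * Gji p2"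
    using schwarz_aux[OF dj dji n(2) n(1)] by blast
  have "s * s * Gij p1 = s * s * Gji p2"
    using e1 e2 by (simp add: algebra_simps)
  then have eqp: "Gij p1 = Gji p2" using s by simp
  have "dist p1 x < d1" using p1 s d1 by (simp add: dist_norm s_def)
  then have a1: "\<bar>Gij p1 - Gij x\<bar> < \<epsilon>" using d1(2) by (simp add: dist_real_def)
  have "dist p2 x < d2" using p2 s d2 by (simp add: dist_norm s_def)
  then have a2: "\<bar>Gji p2 - Gji x\<bar> < \<epsilon>" using d2(2) by (simp add: dist_real_def)
  have "\<bar>Gij x - Gji x\<bar> < 2 * \<epsilon>" using a1 a2 eqp by linarith
  then show False by (simp add: \<epsilon>_def)
qed



declare ipdiff.simps(2)[simp del]

lemma ck_der:
  "Ck_partials k f \<Longrightarrow> length js < k \<Longrightarrow>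
    ((\<lambda>t. ipdiff js f (x + t *\<^sub>R axis i 1)) has_real_derivative ipdiff (i # js) f x) (at 0)"
  unfolding Ck_partials_def by blast

lemma ck_cont: "Ck_partials k f \<Longrightarrow> length js \<le> k \<Longrightarrow> continuous_on UNIV (ipdiff js f)"
  unfolding Ck_partials_def by blast

lemma ipdiff_swap:
  assumes ck: "Ck_partials k f" and len: "length xs + 2 \<le> k"
  shows "ipdiff (a # b # xs) f = ipdiff (b # a # xs) f"
proof
  fix x
  show "ipdiff (a # b # xs) f x = ipdiff (b # a # xs) f x"
  proof (rule schwarz[where G = "ipdiff xs f" and Gi = "ipdiff (b # xs) f" and Gj = "ipdiff (a # xs) f"
        and ei = "axis b 1" and ej = "axis a 1"])
    show "\<And>x. ((\<lambda>t. ipdiff xs f (x + t *\<^sub>R axis b 1)) has_real_derivative ipdiff (b # xs) f x) (at 0)"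
      using ck len by (intro ck_der) auto
    show "\<And>x. ((\<lambda>t. ipdiff xs f (x + t *\<^sub>R axis a 1)) has_real_derivative ipdiff (a # xs) f x) (at 0)"
      using ck len by (intro ck_der) auto
    show "\<And>x. ((\<lambda>t. ipdiff (b # xs) f (x + t *\<^sub>R axis a 1)) has_real_derivative ipdiff (a # b # xs) f x) (at 0)"
      using ck len by (intro ck_der) auto
    show "\<And>x. ((\<lambda>t. ipdiff (a # xs) f (x + t *\<^sub>R axis b 1)) has_real_derivative ipdiff (b # a # xs) f x) (at 0)"
      using ck len by (intro ck_der) auto
    show "continuous_on UNIV (ipdiff (a # b # xs) f)" using ck len by (intro ck_cont) auto
    show "continuous_on UNIV (ipdiff (b # a # xs) f)" using ck len by (intro ck_cont) auto
  qed simp_all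
qed

lemma ipdiff_perm:
  assumes ck: "Ck_partials k f" and "mset xs = mset ys" "length xs \<le> k"
  shows "ipdiff xs f = ipdiff ys f"
proof (rule perm_by_swaps[where F = "\<lambda>xs. ipdiff xs f" and op = pdiff and N = k])
  show "\<And>a xs. ipdiff (a # xs) f = pdiff a (ipdiff xs f)" by (simp add: ipdiff.simps)
  show "\<And>a b xs. length xs + 2 \<le> k \<Longrightarrow> ipdiff (a # b # xs) f = ipdiff (b # a # xs) f"
    using ipdiff_swap[OF ck] by blast
qed (use assms in auto)

lemma ipdiff_symm: "Ck_partials k f \<Longrightarrow> n \<le> k \<Longrightarrow> symm n (\<lambda>js. ipdiff js f x)"
  unfolding symm_def using ipdiff_perm by metis

lemma line_formula:
  assumes ck: "Ck_partials K f" and r: "r \<le> K"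
  shows "(deriv ^^ r) (\<lambda>t. f (\<theta> + t *\<^sub>R h)) = (\<lambda>t. lsum r (\<lambda>js. prodx h js * ipdiff js f (\<theta> + t *\<^sub>R h)))"
  using r
proof (induction r)
  case 0
  show ?case by simp
next
  case (Suc r)
  have IH: "(deriv ^^ r) (\<lambda>t. f (\<theta> + t *\<^sub>R h)) = (\<lambda>t. lsum r (\<lambda>js. prodx h js * ipdiff js f (\<theta> + t *\<^sub>R h)))"
    using Suc by simp
  show ?case
  proof
    fix t0
    have d: "((\<lambda>t. lsum r (\<lambda>js. prodx h js * ipdiff js f (\<theta> + t *\<^sub>R h))) has_real_derivative
       lsum r (\<lambda>js. prodx h js * (\<Sum>i\<in>UNIV. h $ i * ipdiff (i # js) f (\<theta> + t0 *\<^sub>R h)))) (at t0)"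
    proof (rule lsum_deriv, rule DERIV_cmult)
      fix js :: "'a list" assume len: "length js = r"
      show "((\<lambda>t. ipdiff js f (\<theta> + t *\<^sub>R h)) has_real_derivative (\<Sum>i\<in>UNIV. h $ i * ipdiff (i # js) f (\<theta> + t0 *\<^sub>R h))) (at t0)"
      proof (rule deriv_shift_line[where DG = "\<lambda>y. \<Sum>i\<in>UNIV. h $ i * ipdiff (i # js) f y"])
        fix y
        show "((\<lambda>t. ipdiff js f (y + t *\<^sub>R h)) has_real_derivative (\<Sum>i\<in>UNIV. h $ i * ipdiff (i # js) f y)) (at 0)"
        proof (rule dir_deriv[where DG = "\<lambda>i. ipdiff (i # js) f"])
          show "\<And>i x. ((\<lambda>t. ipdiff js f (x + t *\<^sub>R axis i 1)) has_real_derivative ipdiff (i # js) f x) (at 0)"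
            using len Suc.prems by (intro ck_der[OF ck]) simp
          show "\<And>i. continuous_on UNIV (ipdiff (i # js) f)"
            using len Suc.prems by (intro ck_cont[OF ck]) simp
        qed
      qed
    qed
    have "lsum r (\<lambda>js. prodx h js * (\<Sum>i\<in>UNIV. h $ i * ipdiff (i # js) f (\<theta> + t0 *\<^sub>R h)))
        = (\<Sum>i\<in>UNIV. lsum r (\<lambda>js. prodx h js * (h $ i * ipdiff (i # js) f (\<theta> + t0 *\<^sub>R h))))"
      by (simp add: sum_distrib_left lsum_sum)
    also have "\<dots> = lsum (Suc r) (\<lambda>js. prodx h js * ipdiff js f (\<theta> + t0 *\<^sub>R h))"
      by (simp add: lsum_Suc mult_ac)
    finally show "(deriv ^^ Suc r) (\<lambda>t. f (\<theta> + t *\<^sub>R h)) t0 = lsum (Suc r) (\<lambda>js. prodx h js * ipdiff js f (\<theta> + t0 *\<^sub>R h))"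
      using DERIV_imp_deriv[OF d] IH by simp
  qed
qed

lemma pdiff_Lsum:
  fixes Q :: "real^'b::finite^'b" and P :: "'b list \<Rightarrow> 'a::finite list"
  assumes ck: "Ck_partials K f" and P: "\<And>js. length js = 2 * r \<Longrightarrow> length (P js) < K"
  shows "pdiff i (\<lambda>x. Lsum Q r (\<lambda>js. ipdiff (P js) f x)) = (\<lambda>x. Lsum Q r (\<lambda>js. ipdiff (i # P js) f x))"
proof
  fix x
  have "((\<lambda>t. Lsum Q r (\<lambda>js. ipdiff (P js) f (x + t *\<^sub>R axis i 1))) has_real_derivative
      Lsum Q r (\<lambda>js. ipdiff (i # P js) f x)) (at 0)"
  proof (rule Lsum_deriv)
    fix js :: "'b list" assume "length js = 2 * r"
    then show "((\<lambda>t. ipdiff (P js) f (x + t *\<^sub>R axis i 1)) has_real_derivative ipdiff (i # P js) f x) (at 0)"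
      using P by (intro ck_der[OF ck]) simp
  qed
  then show "pdiff i (\<lambda>x. Lsum Q r (\<lambda>js. ipdiff (P js) f x)) x = Lsum Q r (\<lambda>js. ipdiff (i # P js) f x)"
    unfolding pdiff_def by (rule DERIV_imp_deriv)
qed

lemma QLap_pow:
  assumes ck: "Ck_partials K f" and r: "2 * r < K"
  shows "(QLap Q ^^ r) f = (\<lambda>x. Lsum Q r (\<lambda>js. ipdiff js f x))"
  using r
proof (induction r)
  case 0 then show ?case by simp
next
  case (Suc r)
  have IH: "(QLap Q ^^ r) f = (\<lambda>x. Lsum Q r (\<lambda>js. ipdiff js f x))" using Suc by simp
  have p1: "pdiff j (\<lambda>x. Lsum Q r (\<lambda>js. ipdiff js f x)) = (\<lambda>x. Lsum Q r (\<lambda>js. ipdiff (j # js) f x))" for j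
    using pdiff_Lsum[OF ck, of r "\<lambda>js. js" j Q] Suc.prems by simp
  have p2: "pdiff i (\<lambda>x. Lsum Q r (\<lambda>js. ipdiff (j # js) f x)) = (\<lambda>x. Lsum Q r (\<lambda>js. ipdiff (i # j # js) f x))" for i j
    using pdiff_Lsum[OF ck, of r "\<lambda>js. j # js" i Q] Suc.prems by simp
  show ?case
  proof
    fix x
    have "(QLap Q ^^ Suc r) f x = QLap Q (\<lambda>x. Lsum Q r (\<lambda>js. ipdiff js f x)) x"
      using IH by simp
    also have "\<dots> = (\<Sum>i\<in>UNIV. \<Sum>j\<in>UNIV. Q $ i $ j * Lsum Q r (\<lambda>js. ipdiff (i # j # js) f x))"
      unfolding QLap_def p1 p2 by simp
    also have "\<dots> = Lsum Q (Suc r) (\<lambda>js. ipdiff js f x)"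
      by (simp add: Lsum_Suc)
    finally show "(QLap Q ^^ Suc r) f x = Lsum Q (Suc r) (\<lambda>js. ipdiff js f x)" .
  qed
qed

lemma bias_formula:
  assumes ck: "Ck_partials (q + 1) f" and q: "even q"
  shows "bias_vec Q q f \<theta> $ k = Lsum Q (q div 2) (\<lambda>js. ipdiff (k # js) f \<theta>)"
proof -
  have "2 * (q div 2) < q + 1" using q by simp
  then show ?thesis
    unfolding bias_vec_def using QLap_pow[OF ck] pdiff_Lsum[OF ck, of "q div 2" "\<lambda>js. js" k Q] by simp
qed



lemma det_scaleR_mat:
  fixes A :: "real^'n::finite^'n"
  shows "det (c *\<^sub>R A) = c ^ CARD('n) * det A"
proof -
  have "det (c *\<^sub>R A) = (\<Sum>p\<in>{p. p permutes (UNIV :: 'n set)}. of_int (sign p) * (\<Prod>i\<in>UNIV. c * A $ i $ p i))"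
    unfolding det_def by simp
  also have "\<dots> = (\<Sum>p\<in>{p. p permutes (UNIV :: 'n set)}. c ^ CARD('n) * (of_int (sign p) * (\<Prod>i\<in>UNIV. A $ i $ p i)))"
    by (simp add: prod.distrib mult_ac)
  also have "\<dots> = c ^ CARD('n) * det A"
    unfolding det_def by (simp add: sum_distrib_left)
  finally show ?thesis .
qed

lemma matrix_inv_of_inv:
  fixes M :: "real^'n::finite^'n"
  assumes "invertible M"
  shows "M ** matrix_inv M = mat 1" "matrix_inv M ** M = mat 1" "matrix_inv (matrix_inv M) = M"
proof -
  have ex: "\<exists>A'. M ** A' = mat 1 \<and> A' ** M = mat 1" using assms unfolding invertible_def by blast
  have P: "M ** matrix_inv M = mat 1 \<and> matrix_inv M ** M = mat 1"
    unfolding matrix_inv_def by (rule someI_ex[OF ex])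
  then show "M ** matrix_inv M = mat 1" "matrix_inv M ** M = mat 1" by auto
  show "matrix_inv (matrix_inv M) = M"
    unfolding matrix_inv_def[of "matrix_inv M"]
  proof (rule some_equality)
    show "matrix_inv M ** M = mat 1 \<and> M ** matrix_inv M = mat 1" using P by auto
    fix A' assume A': "matrix_inv M ** A' = mat 1 \<and> A' ** matrix_inv M = mat 1"
    have "A' = A' ** (matrix_inv M ** M)" using P by (simp add: matrix_mul_rid)
    also have "\<dots> = (A' ** matrix_inv M) ** M" by (simp add: matrix_mul_assoc)
    also have "\<dots> = M" using A' by (simp add: matrix_mul_lid)
    finally show "A' = M" .
  qed
qed

lemma exists_P:
  fixes a :: "nat \<Rightarrow> real^'n::finite" and s :: "nat \<Rightarrow> real" and q :: nat
  assumes q: "q \<ge> 1" and d: "CARD('n) \<ge> q"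
    and span_dim: "dim (span (a ` {1..q+1})) = q"
    and lin: "(\<Sum>i=1..q+1. s i *\<^sub>R a i) = 0"
    and snz: "\<And>i. i \<in> {1..q+1} \<Longrightarrow> s i \<noteq> 0"
  shows "\<exists>P::real^'n^'n. \<exists>c. \<bar>det P\<bar> = 1 \<and> (\<forall>u\<in>{1..q+1}. \<forall>v\<in>{1..q+1}. u \<noteq> v \<longrightarrow>
            Bq (matrix_inv P ** transpose (matrix_inv P)) (a u) (a v) = c / (s u * s v))"
proof -
  have sq1: "s (q+1) \<noteq> 0" using snz by simp
  have lin': "(\<Sum>i=1..q. s i *\<^sub>R a i) + s (q+1) *\<^sub>R a (q+1) = 0"
    using lin q by (simp add: sum.cl_ivl_Suc)
  have aq1: "a (q+1) = - (1 / s (q+1)) *\<^sub>R (\<Sum>i=1..q. s i *\<^sub>R a i)"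
  proof -
    have "s (q+1) *\<^sub>R a (q+1) = - (\<Sum>i=1..q. s i *\<^sub>R a i)" using lin' by (simp add: eq_neg_iff_add_eq_0 add.commute)
    then have "(1 / s (q+1)) *\<^sub>R (s (q+1) *\<^sub>R a (q+1)) = (1 / s (q+1)) *\<^sub>R (- (\<Sum>i=1..q. s i *\<^sub>R a i))" by simp
    then show ?thesis using sq1 by simp
  qed
  define B where "B = a ` {1..q}"
  have "a (q+1) \<in> span B"
    unfolding aq1 B_def by (intro span_mul span_neg span_sum span_base) auto
  moreover have "a ` {1..q+1} = insert (a (q+1)) B"
    unfolding B_def by (auto simp: atLeastAtMostSuc_conv)
  ultimately have spB: "span (a ` {1..q+1}) = span B"
    by (simp add: span_redundant)
  have finB: "finite B" by (simp add: B_def)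
  have dimB: "dim (span B) = q" using span_dim unfolding spB .
  have cardB: "card B \<le> q" unfolding B_def using card_image_le[of "{1..q}" a] by simp
  have indB: "independent B"
    by (rule card_le_dim_spanning[of B "span B"]) (use finB cardB dimB in \<open>auto intro: span_base\<close>)
  have cardB': "card B = q" using dim_span_eq_card_independent[OF indB] dimB by simp
  have inj_a: "inj_on a {1..q}"
    by (rule eq_card_imp_inj_on) (use cardB' in \<open>simp_all add: B_def\<close>)
  obtain \<iota> :: "nat \<Rightarrow> 'n" where inj\<iota>: "inj_on \<iota> {1..q}"
    using card_le_inj[of "{1..q}" "UNIV :: 'n set"] d by auto
  define e where "e u = (axis (\<iota> u) 1 :: real^'n)" for u
  define U where "U = (\<Sum>v\<in>{1..q}. e v)"
  define \<beta> where "\<beta> = sqrt (real q + 1)"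
  define \<alpha> where "\<alpha> = (\<beta> - 1) / real q"
  define W where "W x = \<beta> *\<^sub>R x - (\<alpha> * (U \<bullet> x)) *\<^sub>R U" for x
  have ee: "e u \<bullet> e v = (if u = v then 1 else 0)" if "u \<in> {1..q}" "v \<in> {1..q}" for u v
    using inj\<iota> that by (auto simp: e_def inner_axis_axis inj_on_eq_iff)
  have Ue: "U \<bullet> e u = 1" if "u \<in> {1..q}" for u
  proof -
    have "U \<bullet> e u = (\<Sum>v\<in>{1..q}. if v = u then 1 else 0)"
      unfolding U_def inner_sum_left using ee that by (intro sum.cong) auto
    then show ?thesis using that by simp
  qed
  have UU: "U \<bullet> U = real q"
  proof -
    have "U \<bullet> U = (\<Sum>v\<in>{1..q}. U \<bullet> e v)" unfolding U_def[of] by (simp add: inner_sum_right U_def[symmetric])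
    also have "\<dots> = (\<Sum>v\<in>{1..q}. 1)" using Ue by simp
    finally show ?thesis by simp
  qed
  have \<beta>2: "\<beta> * \<beta> = real q + 1" unfolding \<beta>_def by simp
  have \<beta>pos: "\<beta> > 0" unfolding \<beta>_def by simp
  have \<alpha>q: "\<alpha> * real q = \<beta> - 1" using q by (simp add: \<alpha>_def)
  have key: "\<alpha> * \<alpha> * real q - 2 * \<alpha> * \<beta> = -1"
  proof -
    have "\<alpha> * \<alpha> * real q - 2 * \<alpha> * \<beta> = \<alpha> * (\<beta> - 1) - 2 * \<alpha> * \<beta>" using \<alpha>q by (simp add: mult.assoc)
    also have "\<dots> = - ((\<beta> - 1) * (\<beta> + 1)) / real q" using q by (simp add: \<alpha>_def field_simps)
    also have "\<dots> = - (\<beta> * \<beta> - 1) / real q" by (simp add: algebra_simps)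
    also have "\<dots> = -1" using \<beta>2 q by simp
    finally show ?thesis .
  qed
  have WW: "W x \<bullet> W y = (real q + 1) * (x \<bullet> y) - (U \<bullet> x) * (U \<bullet> y)" for x y
  proof -
    have "W x \<bullet> W y = \<beta> * \<beta> * (x \<bullet> y) + (U \<bullet> x) * (U \<bullet> y) * (\<alpha> * \<alpha> * (U \<bullet> U) - 2 * \<alpha> * \<beta>)"
      unfolding W_def by (simp add: inner_diff_left inner_diff_right inner_commute algebra_simps)
    then show ?thesis using key \<beta>2 UU by simp
  qed
  have linW: "linear W"
    unfolding linear_iff W_def by (auto simp: inner_add_right algebra_simps scaleR_add_right)
  have UW: "U \<bullet> W z = U \<bullet> z" for z
  proof -
    have "U \<bullet> W z = (U \<bullet> z) * (\<beta> - \<alpha> * real q)"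
      unfolding W_def by (simp add: UU algebra_simps)
    then show ?thesis using \<alpha>q by simp
  qed
  have injW: "inj W"
    unfolding linear_injective_0[OF linW]
  proof (intro allI impI)
    fix z assume z: "W z = 0"
    then have "U \<bullet> z = 0" using UW[of z] by simp
    then have "\<beta> *\<^sub>R z = 0" using z by (simp add: W_def)
    then show "z = 0" using \<beta>pos by simp
  qed
  define y where "y u = (1 / s u) *\<^sub>R e u" for u
  define z where "z u = W (y u)" for u
  have yy: "y u \<bullet> y v = 0" if "u \<in> {1..q}" "v \<in> {1..q}" "u \<noteq> v" for u v
    using ee[OF that(1,2)] that(3) by (simp add: y_def)
  have y_orth: "pairwise orthogonal (y ` {1..q})"
    unfolding pairwise_def orthogonal_def
  proof (intro ballI impI)
    fix x x' assume xx: "x \<in> y ` {1..q}" "x' \<in> y ` {1..q}" "x \<noteq> x'"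
    then obtain u v where uv: "u \<in> {1..q}" "v \<in> {1..q}" "x = y u" "x' = y v" by blast
    with xx(3) have "u \<noteq> v" by blast
    then show "x \<bullet> x' = 0" using yy[OF uv(1,2)] uv(3,4) by simp
  qed
  have y_nz: "0 \<notin> y ` {1..q}"
  proof
    assume "0 \<in> y ` {1..q}"
    then obtain u where u: "u \<in> {1..q}" "y u = 0" by auto
    then have "y u \<bullet> e u = 0" by simp
    moreover have "y u \<bullet> e u = 1 / s u" using ee[OF u(1) u(1)] by (simp add: y_def)
    ultimately show False using snz[of u] u(1) by simp
  qed
  have ind_y: "independent (y ` {1..q})"
    by (rule pairwise_orthogonal_independent[OF y_orth y_nz])
  have inj_y: "inj_on y {1..q}"
  proof (rule inj_onI)
    fix u v assume uv: "u \<in> {1..q}" "v \<in> {1..q}" "y u = y v"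
    show "u = v"
    proof (rule ccontr)
      assume "u \<noteq> v"
      have "y u \<bullet> e u = 1 / s u" using ee[OF uv(1) uv(1)] by (simp add: y_def)
      moreover have "y v \<bullet> e u = 0" using ee[OF uv(2) uv(1)] \<open>u \<noteq> v\<close> by (simp add: y_def)
      ultimately show False using uv snz[of u] by simp
    qed
  qed
  have ind_z: "independent (z ` {1..q})"
  proof -
    have "z ` {1..q} = W ` (y ` {1..q})" by (auto simp: z_def)
    moreover have "independent (W ` (y ` {1..q}))"
      by (rule linear_independent_injective_image[OF linW ind_y inj_on_subset[OF injW subset_UNIV]])
    ultimately show ?thesis by simp
  qed
  have inj_z: "inj_on z {1..q}"
  proof -
    have "inj_on (W \<circ> y) {1..q}"
      by (rule comp_inj_on[OF inj_y inj_on_subset[OF injW subset_UNIV]])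
    moreover have "z = W \<circ> y" by (rule ext) (simp add: z_def)
    ultimately show ?thesis by simp
  qed
  define fz where "fz x = z (inv_into {1..q} a x)" for x
  have fzB: "fz ` B = z ` {1..q}"
  proof -
    have "fz ` B = (\<lambda>u. fz (a u)) ` {1..q}" by (simp add: B_def image_image)
    also have "\<dots> = z ` {1..q}"
    proof (rule image_cong[OF refl])
      fix u assume "u \<in> {1..q}"
      then show "fz (a u) = z u" unfolding fz_def using inv_into_f_f[OF inj_a, of u] by simp
    qed
    finally show ?thesis .
  qed
  have inj_fz: "inj_on fz B"
  proof -
    have i1: "inj_on (inv_into {1..q} a) B"
      unfolding B_def by (rule inj_on_inv_into) simp
    have i2: "inv_into {1..q} a ` B = {1..q}"
      unfolding B_def by (rule inv_into_image_cancel[OF inj_a]) simp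
    have "inj_on (z \<circ> inv_into {1..q} a) B"
      by (rule comp_inj_on[OF i1]) (simp only: i2 inj_z)
    moreover have "fz = z \<circ> inv_into {1..q} a" by (rule ext) (simp add: fz_def)
    ultimately show ?thesis by simp
  qed
  obtain g where g: "linear g" "inj g" "\<And>x. x \<in> B \<Longrightarrow> g x = fz x"
    using linear_independent_extend_inj[OF indB _ inj_fz] ind_z fzB by auto
  have ga: "g (a u) = z u" if "u \<in> {1..q}" for u
    using g(3)[of "a u"] that inj_a by (simp add: B_def fz_def inv_into_f_f)
  define E where "E u = (if u \<le> q then e u else - U)" for u
  have gE: "g (a u) = (1 / s u) *\<^sub>R W (E u)" if "u \<in> {1..q+1}" for u
  proof (cases "u \<le> q")
    case True
    then have "u \<in> {1..q}" using that by auto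
    then show ?thesis using True by (simp add: ga z_def y_def E_def linear_cmul[OF linW])
  next
    case False
    then have u: "u = q + 1" using that by auto
    have "g (a (q+1)) = - (1 / s (q+1)) *\<^sub>R (\<Sum>i=1..q. s i *\<^sub>R g (a i))"
      unfolding aq1 by (simp add: linear_cmul[OF g(1)] linear_sum[OF g(1)] linear_neg[OF g(1)])
    also have "\<dots> = - (1 / s (q+1)) *\<^sub>R (\<Sum>i=1..q. W (e i))"
    proof -
      have "(\<Sum>i=1..q. s i *\<^sub>R g (a i)) = (\<Sum>i=1..q. W (e i))"
        by (rule sum.cong) (auto simp: ga z_def y_def linear_cmul[OF linW] snz)
      then show ?thesis by simp
    qed
    also have "\<dots> = (1 / s (q+1)) *\<^sub>R W (- U)"
      unfolding U_def by (simp add: linear_sum[OF linW] linear_neg[OF linW])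
    finally show ?thesis using u by (simp add: E_def)
  qed
  have WE: "W (E u) \<bullet> W (E v) = -1" if uv: "u \<in> {1..q+1}" "v \<in> {1..q+1}" "u \<noteq> v" for u v
  proof -
    have cases: "(u \<le> q \<and> v \<le> q) \<or> (u \<le> q \<and> v = q+1) \<or> (u = q+1 \<and> v \<le> q)"
      using uv by auto
    moreover have ?thesis if 1: "u \<le> q" "v \<le> q"
    proof -
      have "u \<in> {1..q}" "v \<in> {1..q}" using 1 uv by auto
      then show ?thesis using 1 uv by (simp add: WW E_def ee Ue)
    qed
    moreover have ?thesis if 2: "u \<le> q" "v = q+1"
    proof -
      have "u \<in> {1..q}" using 2 uv by auto
      then have f: "U \<bullet> e u = 1" "e u \<bullet> U = 1" using Ue by (auto simp: inner_commute)
      have "W (E u) \<bullet> W (E v) = (real q + 1) * (e u \<bullet> (- U)) - (U \<bullet> e u) * (U \<bullet> (- U))"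
        using 2 by (simp add: WW E_def)
      also have "\<dots> = -1" by (simp only: inner_minus_right f UU) simp
      finally show ?thesis .
    qed
    moreover have ?thesis if 3: "u = q+1" "v \<le> q"
    proof -
      have "v \<in> {1..q}" using 3 uv by auto
      then have f: "U \<bullet> e v = 1" "e v \<bullet> U = 1" using Ue by (auto simp: inner_commute)
      have "W (E u) \<bullet> W (E v) = (real q + 1) * ((- U) \<bullet> e v) - (U \<bullet> (- U)) * (U \<bullet> e v)"
        using 3 by (simp add: WW E_def)
      also have "\<dots> = -1" by (simp only: inner_minus_right inner_minus_left f UU) simp
      finally show ?thesis .
    qed
    ultimately show ?thesis by blast
  qed
  have gram: "g (a u) \<bullet> g (a v) = - 1 / (s u * s v)" if "u \<in> {1..q+1}" "v \<in> {1..q+1}" "u \<noteq> v" for u v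
    using WE[OF that] by (simp add: gE[OF that(1)] gE[OF that(2)])
  define N where "N = matrix g"
  have Nv: "N *v x = g x" for x
    using matrix_vector_mul(2)[OF g(1)] unfolding N_def by metis
  have invN: "invertible N"
    unfolding invertible_left_inverse matrix_left_invertible_injective
    using g(2) Nv by (simp add: inj_def)
  have detN: "det N \<noteq> 0" using invN invertible_det_nz by blast
  define lam where "lam = inverse (root CARD('n) \<bar>det N\<bar>)"
  have card_pos: "CARD('n) > 0" by simp
  have lampow: "lam ^ CARD('n) = inverse \<bar>det N\<bar>"
    unfolding lam_def by (simp add: power_inverse real_root_pow_pos2[OF card_pos])
  have lamnz: "lam \<noteq> 0" unfolding lam_def using detN card_pos by simp
  define N' where "N' = lam *\<^sub>R N"
  define M where "M = transpose N'"
  have detM: "\<bar>det M\<bar> = 1"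
  proof -
    have "det M = lam ^ CARD('n) * det N" unfolding M_def N'_def det_transpose det_scaleR_mat ..
    then have "\<bar>det M\<bar> = inverse \<bar>det N\<bar> * \<bar>det N\<bar>"
      using lampow by (simp add: abs_mult)
    then show ?thesis using detN by simp
  qed
  have invM: "invertible M" using detM invertible_det_nz by fastforce
  define P where "P = matrix_inv M"
  have PinvM: "matrix_inv P = M" unfolding P_def by (rule matrix_inv_of_inv(3)[OF invM])
  have detP: "\<bar>det P\<bar> = 1"
  proof -
    have "det (P ** M) = 1" unfolding P_def using matrix_inv_of_inv(2)[OF invM] by simp
    then have "\<bar>det P\<bar> * \<bar>det M\<bar> = 1" by (metis abs_1 abs_mult det_mul)
    then show ?thesis using detM by simp
  qed
  have Bqeq: "Bq (M ** transpose M) x w = lam * lam * (g x \<bullet> g w)" for x w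
  proof -
    have "Bq (M ** transpose M) x w = x \<bullet> ((M ** transpose M) *v w)"
      unfolding Bq_def inner_vec_def matrix_vector_mult_def
      by (simp add: sum_distrib_left mult_ac)
    also have "\<dots> = x \<bullet> (M *v (N' *v w))"
      by (simp add: M_def matrix_vector_mul_assoc)
    also have "\<dots> = (x v* M) \<bullet> (N' *v w)" by (simp add: dot_lmul_matrix)
    also have "\<dots> = (N' *v x) \<bullet> (N' *v w)" by (simp add: M_def)
    also have "\<dots> = lam * lam * (g x \<bullet> g w)"
      by (simp add: N'_def scaleR_matrix_vector_assoc[symmetric] Nv)
    finally show ?thesis .
  qed
  show ?thesis
  proof (intro exI conjI ballI impI)
    show "\<bar>det P\<bar> = 1" by (rule detP)
    fix u v assume uv: "u \<in> {1..q+1}" "v \<in> {1..q+1}" "u \<noteq> v"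
    show "Bq (matrix_inv P ** transpose (matrix_inv P)) (a u) (a v) = (- (lam * lam)) / (s u * s v)"
      unfolding PinvM Bqeq using gram[OF uv] by simp
  qed
qed



lemma div_eq_helper: "x / (c::real) = y \<Longrightarrow> c \<noteq> 0 \<Longrightarrow> x = c * y"
  by (simp add: field_simps)

theorem proposition3:
  fixes f :: "real^'n \<Rightarrow> real" and \<theta> :: "real^'n"
    and q :: nat and a :: "nat \<Rightarrow> real^'n" and s :: "nat \<Rightarrow> real"
  assumes q_even: "even q" and q_ge: "q \<ge> 2" and d_ge: "CARD('n) \<ge> q"
    and density: "\<forall>x. 0 \<le> f x" "(f has_integral 1) UNIV"
    and mode: "\<forall>x. f x \<le> f \<theta>"
    and smooth: "Ck_partials (q + 1) f"
    and hess_inv: "invertible (hessian f \<theta>)"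
    and taylor: "\<forall>h. (deriv ^^ (q + 1)) (\<lambda>t. f (\<theta> + t *\<^sub>R h)) 0 / fact (q + 1)
                     = (\<Prod>i = 1..q + 1. a i \<bullet> h)"
    and span_dim: "dim (span (a ` {1..q + 1})) = q"
    and lin_rel: "(\<Sum>i = 1..q + 1. s i *\<^sub>R a i) = 0"
    and s_nz: "(\<Prod>i = 1..q + 1. s i) \<noteq> 0"
  shows "\<exists>P :: real^'n^'n. \<bar>det P\<bar> = 1 \<and>
           bias_vec (matrix_inv P ** transpose (matrix_inv P)) q f \<theta> = 0"
proof -
  have snz: "s i \<noteq> 0" if "i \<in> {1..q+1}" for i
  proof
    assume "s i = 0"
    then have "(\<Prod>i = 1..q + 1. s i) = 0" using that by (intro prod_zero) auto
    then show False using s_nz by simp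
  qed
  define T where "T js = ipdiff js f \<theta>" for js
  have diagT: "lsum (q+1) (\<lambda>js. prodx h js * T js) = fact (q+1) * (\<Prod>i = 1..q+1. a i \<bullet> h)" for h
  proof -
    have "(deriv ^^ (q+1)) (\<lambda>t. f (\<theta> + t *\<^sub>R h)) 0 = lsum (q+1) (\<lambda>js. prodx h js * ipdiff js f \<theta>)"
      using line_formula[OF smooth, of "q+1" \<theta> h] by simp
    moreover have "(deriv ^^ (q+1)) (\<lambda>t. f (\<theta> + t *\<^sub>R h)) 0 = fact (q+1) * (\<Prod>i = 1..q+1. a i \<bullet> h)"
      by (rule div_eq_helper[OF taylor[rule_format, of h]]) simp
    ultimately show ?thesis by (simp add: T_def)
  qed
  have diagS: "lsum (q+1) (\<lambda>js. prodx h js * Sy a {1..q+1} js) = fact (q+1) * (\<Prod>i = 1..q+1. a i \<bullet> h)" for h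
    by (rule Sy_diag) simp_all
  define Dd where "Dd js = T js - Sy a {1..q+1} js" for js
  have symD: "symm (q+1) Dd"
    unfolding Dd_def T_def by (rule symm_diff[OF ipdiff_symm[OF smooth order.refl] Sy_symm])
  have zeroD: "lsum (q+1) (\<lambda>js. Dd js * prodx x js) = 0" for x
  proof -
    have "lsum (q+1) (\<lambda>js. Dd js * prodx x js) = lsum (q+1) (\<lambda>js. prodx x js * T js - prodx x js * Sy a {1..q+1} js)"
      by (rule lsum_cong) (simp add: Dd_def algebra_simps)
    also have "\<dots> = 0" unfolding lsum_diff diagT diagS by simp
    finally show ?thesis .
  qed
  have TS: "T js = Sy a {1..q+1} js" if "length js = q+1" for js
    using polarization[OF symD zeroD that] by (simp add: Dd_def)
  have "q \<ge> 1" using q_ge by simp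
  from exists_P[OF this d_ge span_dim lin_rel snz]
  obtain P :: "real^'n^'n" and c where P: "\<bar>det P\<bar> = 1"
    and B: "\<And>u v. u \<in> {1..q+1} \<Longrightarrow> v \<in> {1..q+1} \<Longrightarrow> u \<noteq> v \<Longrightarrow>
       Bq (matrix_inv P ** transpose (matrix_inv P)) (a u) (a v) = c / (s u * s v)"
    by blast
  define Q where "Q = matrix_inv P ** transpose (matrix_inv P)"
  define m where "m = q div 2"
  have q2m: "q = 2 * m" using q_even by (simp add: m_def)
  have "bias_vec Q q f \<theta> $ k = 0" for k
  proof -
    have "bias_vec Q q f \<theta> $ k = Lsum Q m (\<lambda>js. T (k # js))"
      using bias_formula[OF smooth q_even] by (simp add: m_def T_def)
    also have "\<dots> = Lsum Q m (\<lambda>js. Sy a {1..q+1} (k # js))"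
      by (rule Lsum_cong) (simp add: TS q2m)
    also have "\<dots> = (\<Sum>i\<in>{1..q+1}. a i $ k * Lsum Q m (Sy a ({1..q+1} - {i})))"
      by (simp only: Sy.simps Lsum_sum Lsum_cmult)
    also have "\<dots> = (\<Sum>i\<in>{1..q+1}. a i $ k * (c ^ m * fact (2 * m) * (\<Prod>u\<in>{1..q+1} - {i}. 1 / s u)))"
    proof (rule sum.cong[OF refl])
      fix i assume i: "i \<in> {1..q+1}"
      have "Lsum Q m (Sy a ({1..q+1} - {i})) = c ^ m * fact (2 * m) * (\<Prod>u\<in>{1..q+1} - {i}. 1 / s u)"
      proof (rule Lsum_Sy[where Iz = "{1..q+1}"])
        show "\<And>u v. u \<in> {1..q+1} \<Longrightarrow> v \<in> {1..q+1} \<Longrightarrow> u \<noteq> v \<Longrightarrow> Bq Q (a u) (a v) = c / (s u * s v)"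
          unfolding Q_def by (rule B)
        show "\<And>u. u \<in> {1..q+1} \<Longrightarrow> s u \<noteq> 0" by (rule snz)
        show "{1..q+1} - {i} \<subseteq> {1..q+1}" by blast
        show "finite ({1..q+1} - {i})" by simp
        show "card ({1..q+1} - {i}) = 2 * m" using i q2m by simp
      qed
      then show "a i $ k * Lsum Q m (Sy a ({1..q+1} - {i})) = a i $ k * (c ^ m * fact (2 * m) * (\<Prod>u\<in>{1..q+1} - {i}. 1 / s u))"
        by simp
    qed
    also have "\<dots> = c ^ m * fact (2 * m) * (\<Prod>u\<in>{1..q+1}. 1 / s u) * (\<Sum>i\<in>{1..q+1}. s i * a i $ k)"
    proof -
      have "a i $ k * (c ^ m * fact (2 * m) * (\<Prod>u\<in>{1..q+1} - {i}. 1 / s u))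
          = c ^ m * fact (2 * m) * (\<Prod>u\<in>{1..q+1}. 1 / s u) * (s i * a i $ k)" if i: "i \<in> {1..q+1}" for i
      proof -
        have "(\<Prod>u\<in>{1..q+1}. 1 / s u) = (1 / s i) * (\<Prod>u\<in>{1..q+1} - {i}. 1 / s u)"
          using prod.remove[of "{1..q+1}" i "\<lambda>u. 1 / s u"] i by simp
        then show ?thesis using snz[OF i] by simp
      qed
      then have "(\<Sum>i\<in>{1..q+1}. a i $ k * (c ^ m * fact (2 * m) * (\<Prod>u\<in>{1..q+1} - {i}. 1 / s u)))
          = (\<Sum>i\<in>{1..q+1}. c ^ m * fact (2 * m) * (\<Prod>u\<in>{1..q+1}. 1 / s u) * (s i * a i $ k))"
        by (intro sum.cong refl) blast
      also have "\<dots> = c ^ m * fact (2 * m) * (\<Prod>u\<in>{1..q+1}. 1 / s u) * (\<Sum>i\<in>{1..q+1}. s i * a i $ k)"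
        by (rule sum_distrib_left[symmetric])
      finally show ?thesis .
    qed
    also have "(\<Sum>i\<in>{1..q+1}. s i * a i $ k) = 0"
    proof -
      have "(\<Sum>i\<in>{1..q+1}. s i * a i $ k) = (\<Sum>i = 1..q + 1. s i *\<^sub>R a i) $ k"
        by (simp add: sum_component)
      also have "\<dots> = 0" by (simp only: lin_rel zero_index)
      finally show ?thesis .
    qed
    finally show ?thesis by simp
  qed
  then have "bias_vec Q q f \<theta> = 0" by (simp add: vec_eq_iff)
  then show ?thesis using P unfolding Q_def by blast
qed

end
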